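(* Let $G$ be a $\lambda$-graph and $Q$ a query over $G$. Then $Q^{\Downarrow}$ is a bisimulation if and only if $Q^{\#}$ is a bisimulation.
   Context: A pre-$\lambda$-graph is a directed graph whose nodes are of four kinds: an application node $@(n_1,n_2)$ has exactly two children, its left child $n_1$ and its right child $n_2$; an abstraction node $\lambda(n)$ has exactly one child, its body $n$; a free variable node has no children and carries an atom $\mathrm{id}(n)$ from a fixed set of atoms, distinct free variable nodes carrying distinct atoms; a bound variable node $\mathrm{var}(l)$ has exactly one outgoing binding edge, to an abstraction node $l$ (its binder). A trace is a finite sequence of directions from $\{\swarrow,\downarrow,\searrow\}$; $\epsilon$ is the empty trace and $d\cdot\tau$ is the trace $\tau$ extended by one final step $d$. Paths $n\xrightarrow{\tau}m$ are defined inductively: $n\xrightarrow{\epsilon}n$; if $n\xrightarrow{\tau}\lambda(m)$ then $n\xrightarrow{\downarrow\cdot\tau}m$; if $n\xrightarrow{\tau}@(m_1,m_2)$ then $n\xrightarrow{\swarrow\cdot\tau}m_1$ and $n\xrightarrow{\searrow\cdot\tau}m_2$ (binding edges are never followed). The path $n\xrightarrow{\tau}$ crosses a node $m$ if either $n\xrightarrow{\tau}m$, or $\tau=d\cdot\tau'$ and $n\xrightarrow{\tau'}$ crosses $m$. A root is a node $r$ such that the only path ending in $r$ has the empty trace. A node $m$ dominates $n$ if every path from a root to $n$ crosses $m$. A $\lambda$-graph is a pre-$\lambda$-graph that has finitely many nodes, is acyclic ($n\xrightarrow{\tau}n$ holds only for $\tau=\epsilon$), and is dominated (every bound variable node $\mathrm{var}(l)$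 is dominated by its binder $l$). Two nodes are homogeneous if both are application nodes, or both abstraction nodes, or both free variable nodes, or both bound variable nodes; a binary relation $R$ on nodes is homogeneous if it only relates homogeneous nodes. Rules: $(\swarrow)$: $@(n_1,n_2)\,R\,@(m_1,m_2)$ implies $n_1\,R\,m_1$; $(\searrow)$: $@(n_1,n_2)\,R\,@(m_1,m_2)$ implies $n_2\,R\,m_2$; $(\downarrow)$: $\lambda(n)\,R\,\lambda(m)$ implies $n\,R\,m$; $(\circlearrowright)$: $\mathrm{var}(n)\,R\,\mathrm{var}(m)$ implies $n\,R\,m$. $R$ is propagated if closed under $(\swarrow),(\downarrow),(\searrow)$. A bisimulation is a homogeneous propagated relation closed also under $(\circlearrowright)$. $R^{\Downarrow}$ (propagation) is the smallest propagated relation containing $R$; $R^{\#}$ (spreading) is the smallest propagated equivalence relation containing $R$. A query over $G$ is a binary relation on the roots of $G$. *)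

theory Defs
  imports Main
begin

text \<open>Nodes of a (pre-)lambda-graph are the elements of the type 'n; the graph G
assigns to each node its kind and its outgoing edges. 'a is the set of atoms.\<close>

datatype ('n, 'a) node = App 'n 'n | Lam 'n | FVar 'a | BVar 'n

datatype dir = SW | Down | SE

text \<open>Traces are lists; d # tau is the trace tau extended by one final step d.\<close>

inductive path :: "('n \<Rightarrow> ('n, 'a) node) \<Rightarrow> 'n \<Rightarrow> dir list \<Rightarrow> 'n \<Rightarrow> bool"
  for G where
  path_nil: "path G n [] n"
| path_down: "path G n tau m \<Longrightarrow> G m = Lam m' \<Longrightarrow> path G n (Down # tau) m'"
| path_sw: "path G n tau m \<Longrightarrow> G m = App m1 m2 \<Longrightarrow> path G n (SW # tau) m1"
| path_se: "path G n tau m \<Longrightarrow> G m = App m1 m2 \<Longrightarrow> path G n (SE # tau) m2"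

fun crosses :: "('n \<Rightarrow> ('n, 'a) node) \<Rightarrow> 'n \<Rightarrow> dir list \<Rightarrow> 'n \<Rightarrow> bool" where
  "crosses G n [] m = path G n [] m"
| "crosses G n (d # tau) m = (path G n (d # tau) m \<or> crosses G n tau m)"

definition is_root :: "('n \<Rightarrow> ('n, 'a) node) \<Rightarrow> 'n \<Rightarrow> bool" where
  "is_root G r \<longleftrightarrow> (\<forall>n tau. path G n tau r \<longrightarrow> tau = [])"

definition dominates :: "('n \<Rightarrow> ('n, 'a) node) \<Rightarrow> 'n \<Rightarrow> 'n \<Rightarrow> bool" where
  "dominates G m n \<longleftrightarrow> (\<forall>r tau. is_root G r \<longrightarrow> path G r tau n \<longrightarrow> crosses G r tau m)"

definition pre_lambda_graph :: "('n \<Rightarrow> ('n, 'a) node) \<Rightarrow> bool" where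
  "pre_lambda_graph G \<longleftrightarrow>
     (\<forall>n l. G n = BVar l \<longrightarrow> (\<exists>b. G l = Lam b)) \<and>
     (\<forall>n m a. G n = FVar a \<longrightarrow> G m = FVar a \<longrightarrow> n = m)"

definition lambda_graph :: "('n \<Rightarrow> ('n, 'a) node) \<Rightarrow> bool" where
  "lambda_graph G \<longleftrightarrow> pre_lambda_graph G \<and> finite (UNIV :: 'n set) \<and>
     (\<forall>n tau. path G n tau n \<longrightarrow> tau = []) \<and>
     (\<forall>n l. G n = BVar l \<longrightarrow> dominates G l n)"

definition homogeneous_nodes :: "('n \<Rightarrow> ('n, 'a) node) \<Rightarrow> 'n \<Rightarrow> 'n \<Rightarrow> bool" where
  "homogeneous_nodes G n m \<longleftrightarrow>
     ((\<exists>a b c d. G n = App a b \<and> G m = App c d) \<or>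
      (\<exists>a b. G n = Lam a \<and> G m = Lam b) \<or>
      (\<exists>a b. G n = FVar a \<and> G m = FVar b) \<or>
      (\<exists>a b. G n = BVar a \<and> G m = BVar b))"

definition homogeneous :: "('n \<Rightarrow> ('n, 'a) node) \<Rightarrow> ('n \<times> 'n) set \<Rightarrow> bool" where
  "homogeneous G R \<longleftrightarrow> (\<forall>(n, m) \<in> R. homogeneous_nodes G n m)"

definition propagated :: "('n \<Rightarrow> ('n, 'a) node) \<Rightarrow> ('n \<times> 'n) set \<Rightarrow> bool" where
  "propagated G R \<longleftrightarrow>
     (\<forall>n m n1 n2 m1 m2. (n, m) \<in> R \<longrightarrow> G n = App n1 n2 \<longrightarrow> G m = App m1 m2 \<longrightarrow>
        (n1, m1) \<in> R \<and> (n2, m2) \<in> R) \<and>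
     (\<forall>n m n' m'. (n, m) \<in> R \<longrightarrow> G n = Lam n' \<longrightarrow> G m = Lam m' \<longrightarrow> (n', m') \<in> R)"

definition bisimulation :: "('n \<Rightarrow> ('n, 'a) node) \<Rightarrow> ('n \<times> 'n) set \<Rightarrow> bool" where
  "bisimulation G R \<longleftrightarrow> homogeneous G R \<and> propagated G R \<and>
     (\<forall>n m l k. (n, m) \<in> R \<longrightarrow> G n = BVar l \<longrightarrow> G m = BVar k \<longrightarrow> (l, k) \<in> R)"

text \<open>R^\<Down>: smallest propagated relation containing R.\<close>
definition propagation :: "('n \<Rightarrow> ('n, 'a) node) \<Rightarrow> ('n \<times> 'n) set \<Rightarrow> ('n \<times> 'n) set" where
  "propagation G R = \<Inter>{S. R \<subseteq> S \<and> propagated G S}"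

text \<open>R^#: smallest propagated equivalence relation (on the nodes) containing R.\<close>
definition spreading :: "('n \<Rightarrow> ('n, 'a) node) \<Rightarrow> ('n \<times> 'n) set \<Rightarrow> ('n \<times> 'n) set" where
  "spreading G R = \<Inter>{S. R \<subseteq> S \<and> propagated G S \<and> equiv UNIV S}"

definition query :: "('n \<Rightarrow> ('n, 'a) node) \<Rightarrow> ('n \<times> 'n) set \<Rightarrow> bool" where
  "query G Q \<longleftrightarrow> (\<forall>(r, s) \<in> Q. is_root G r \<and> is_root G s)"

end

theory Submission
  imports Defs
begin

lemma path_det: "path G a t b \<Longrightarrow> path G a t c \<Longrightarrow> b = c"
proof (induction arbitrary: c rule: path.induct)
  case (path_nil n) then show ?case by (cases rule: path.cases) auto
next
  case (path_down n tau m m') from path_down.prems show ?case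
    by (cases rule: path.cases) (use path_down in auto)
next
  case (path_sw n tau m m1 m2) from path_sw.prems show ?case
    by (cases rule: path.cases) (use path_sw in auto)
next
  case (path_se n tau m m1 m2) from path_se.prems show ?case
    by (cases rule: path.cases) (use path_se in auto)
qed

lemma path_app: "path G b t2 c \<Longrightarrow> path G a t1 b \<Longrightarrow> path G a (t2 @ t1) c"
  by (induction rule: path.induct) (auto intro: path.intros)

lemma path_split: "path G a (t0 @ t1) b \<Longrightarrow> \<exists>x. path G a t1 x \<and> path G x t0 b"
proof (induction t0 arbitrary: b)
  case Nil then show ?case by (auto intro: path.intros)
next
  case (Cons d t0)
  from Cons.prems show ?case
  proof (cases rule: path.cases)
    case path_nil then show ?thesis by simp
  next
    case (path_down _ m)
    then have "path G a (t0 @ t1) m" by simp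
    with Cons.IH obtain x where "path G a t1 x" "path G x t0 m" by blast
    then show ?thesis using path_down by (auto intro: path.intros)
  next
    case (path_sw _ m)
    then have "path G a (t0 @ t1) m" by simp
    with Cons.IH obtain x where "path G a t1 x" "path G x t0 m" by blast
    then show ?thesis using path_sw by (auto intro: path.intros)
  next
    case (path_se _ m)
    then have "path G a (t0 @ t1) m" by simp
    with Cons.IH obtain x where "path G a t1 x" "path G x t0 m" by blast
    then show ?thesis using path_se by (auto intro: path.intros)
  qed
qed

lemma crosses_split: "crosses G r t l \<Longrightarrow> \<exists>t0 t1. t = t0 @ t1 \<and> path G r t1 l"
proof (induction t)
  case Nil then show ?case by auto
next
  case (Cons d t)
  show ?case
  proof (cases "path G r (d # t) l")
    case True then show ?thesis by (metis append_Nil)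
  next
    case False
    with Cons.prems have "crosses G r t l" by simp
    with Cons.IH obtain t0 t1 where "t = t0 @ t1" "path G r t1 l" by blast
    then show ?thesis by (metis append_Cons)
  qed
qed

lemma two_path:
  assumes pr: "propagated G S"
  shows "path G r t n \<Longrightarrow> path G s t m \<Longrightarrow> (r, s) \<in> S \<Longrightarrow> (n, m) \<in> S"
proof (induction arbitrary: m rule: path.induct)
  case (path_nil n) then show ?case by (cases rule: path.cases) auto
next
  case (path_down n tau x x')
  from path_down.prems(1) show ?case
  proof (cases rule: path.cases)
    case (path_down y)
    then have "(x, y) \<in> S" using path_down.IH path_down.prems(2) by simp
    then show ?thesis using pr path_down path_down.hyps(2) unfolding propagated_def by blast
  qed
next
  case (path_sw n tau x m1 m2)
  from path_sw.prems(1) show ?case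
  proof (cases rule: path.cases)
    case (path_sw y y2)
    then have "(x, y) \<in> S" using path_sw.IH path_sw.prems(2) by simp
    then show ?thesis using pr path_sw path_sw.hyps(2) unfolding propagated_def by blast
  qed
next
  case (path_se n tau x m1 m2)
  from path_se.prems(1) show ?case
  proof (cases rule: path.cases)
    case (path_se y y1)
    then have "(x, y) \<in> S" using path_se.IH path_se.prems(2) by simp
    then show ?thesis using pr path_se path_se.hyps(2) unfolding propagated_def by blast
  qed
qed

definition T :: "('n \<Rightarrow> ('n, 'a) node) \<Rightarrow> ('n \<times> 'n) set \<Rightarrow> ('n \<times> 'n) set" where
  "T G Q = {(n, m). \<exists>r s t. (r, s) \<in> Q \<and> path G r t n \<and> path G s t m}"

lemma T_I: "(r, s) \<in> Q \<Longrightarrow> path G r t n \<Longrightarrow> path G s t m \<Longrightarrow> (n, m) \<in> T G Q"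
  unfolding T_def by blast

lemma T_E: "(n, m) \<in> T G Q \<Longrightarrow> \<exists>r s t. (r, s) \<in> Q \<and> path G r t n \<and> path G s t m"
  unfolding T_def by simp

lemma T_prop: "propagated G (T G Q)"
  unfolding propagated_def
proof (intro conjI allI impI)
  fix n m n1 n2 m1 m2 assume nm: "(n, m) \<in> T G Q" and a: "G n = App n1 n2" "G m = App m1 m2"
  from T_E[OF nm] obtain r s t where rs: "(r, s) \<in> Q" "path G r t n" "path G s t m" by blast
  show "(n1, m1) \<in> T G Q" by (rule T_I[OF rs(1) path.path_sw[OF rs(2) a(1)] path.path_sw[OF rs(3) a(2)]])
  show "(n2, m2) \<in> T G Q" by (rule T_I[OF rs(1) path.path_se[OF rs(2) a(1)] path.path_se[OF rs(3) a(2)]])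
next
  fix n m n' m' assume nm: "(n, m) \<in> T G Q" and a: "G n = Lam n'" "G m = Lam m'"
  from T_E[OF nm] obtain r s t where rs: "(r, s) \<in> Q" "path G r t n" "path G s t m" by blast
  show "(n', m') \<in> T G Q" by (rule T_I[OF rs(1) path.path_down[OF rs(2) a(1)] path.path_down[OF rs(3) a(2)]])
qed

lemma T_sup: "Q \<subseteq> T G Q"
proof (rule subrelI)
  fix r s assume "(r, s) \<in> Q" then show "(r, s) \<in> T G Q" by (rule T_I) (rule path.path_nil)+
qed

lemma T_sub: "propagated G S \<Longrightarrow> Q \<subseteq> S \<Longrightarrow> T G Q \<subseteq> S"
proof (rule subrelI)
  fix n m assume p: "propagated G S" and q: "Q \<subseteq> S" and x: "(n, m) \<in> T G Q"
  from T_E[OF x] obtain r s t where rs: "(r, s) \<in> Q" "path G r t n" "path G s t m" by blast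
  from q rs(1) have "(r, s) \<in> S" by (rule subsetD)
  with two_path[OF p rs(2) rs(3)] show "(n, m) \<in> S" by simp
qed

lemma propagation_eq: "propagation G Q = T G Q"
proof
  show "propagation G Q \<subseteq> T G Q" unfolding propagation_def
    by (rule Inter_lower) (simp add: T_prop T_sup)
  show "T G Q \<subseteq> propagation G Q" unfolding propagation_def
  proof (rule Inter_greatest)
    fix X assume "X \<in> {S. Q \<subseteq> S \<and> propagated G S}"
    then show "T G Q \<subseteq> X" using T_sub[of G X Q] by simp
  qed
qed

lemma Inter_propagated: "(\<And>X. X \<in> F \<Longrightarrow> propagated G X) \<Longrightarrow> propagated G (\<Inter>F)"
  unfolding propagated_def
proof (intro conjI allI impI)
  fix n m n1 n2 m1 m2
  assume H: "\<And>X. X \<in> F \<Longrightarrow>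
      (\<forall>n m n1 n2 m1 m2. (n, m) \<in> X \<longrightarrow> G n = App n1 n2 \<longrightarrow> G m = App m1 m2 \<longrightarrow> (n1, m1) \<in> X \<and> (n2, m2) \<in> X) \<and>
      (\<forall>n m n' m'. (n, m) \<in> X \<longrightarrow> G n = Lam n' \<longrightarrow> G m = Lam m' \<longrightarrow> (n', m') \<in> X)"
    and nm: "(n, m) \<in> \<Inter>F" and a: "G n = App n1 n2" "G m = App m1 m2"
  show "(n1, m1) \<in> \<Inter>F"
  proof
    fix X assume X: "X \<in> F" show "(n1, m1) \<in> X" using H[OF X] nm X a by blast
  qed
  show "(n2, m2) \<in> \<Inter>F"
  proof
    fix X assume X: "X \<in> F" show "(n2, m2) \<in> X" using H[OF X] nm X a by blast
  qed
next
  fix n m n' m'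
  assume H: "\<And>X. X \<in> F \<Longrightarrow>
      (\<forall>n m n1 n2 m1 m2. (n, m) \<in> X \<longrightarrow> G n = App n1 n2 \<longrightarrow> G m = App m1 m2 \<longrightarrow> (n1, m1) \<in> X \<and> (n2, m2) \<in> X) \<and>
      (\<forall>n m n' m'. (n, m) \<in> X \<longrightarrow> G n = Lam n' \<longrightarrow> G m = Lam m' \<longrightarrow> (n', m') \<in> X)"
    and nm: "(n, m) \<in> \<Inter>F" and a: "G n = Lam n'" "G m = Lam m'"
  show "(n', m') \<in> \<Inter>F"
  proof
    fix X assume X: "X \<in> F" show "(n', m') \<in> X" using H[OF X] nm X a by blast
  qed
qed

lemma Inter_equiv: "(\<And>X. X \<in> F \<Longrightarrow> equiv UNIV X) \<Longrightarrow> equiv (UNIV :: 'b set) (\<Inter>F)"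
proof (rule equivI)
  assume H: "\<And>X. X \<in> F \<Longrightarrow> equiv UNIV X"
  show "\<Inter>F \<subseteq> UNIV \<times> UNIV" by simp
  show "refl_on UNIV (\<Inter>F)"
  proof (rule refl_onI)
    fix x :: 'b show "(x, x) \<in> \<Inter>F"
    proof
      fix X assume "X \<in> F" then have "refl_on UNIV X" using H by (blast elim: equivE)
      then show "(x, x) \<in> X" by (rule refl_onD) simp
    qed
  qed
  show "sym (\<Inter>F)"
  proof (rule symI)
    fix x y assume xy: "(x, y) \<in> \<Inter>F" show "(y, x) \<in> \<Inter>F"
    proof
      fix X assume X: "X \<in> F" then have "sym X" using H by (blast elim: equivE)
      then show "(y, x) \<in> X" using xy X by (blast dest: symD)
    qed
  qed
  show "trans (\<Inter>F)"
  proof (rule transI)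
    fix x y z assume xy: "(x, y) \<in> \<Inter>F" and yz: "(y, z) \<in> \<Inter>F" show "(x, z) \<in> \<Inter>F"
    proof
      fix X assume X: "X \<in> F" then have "trans X" using H by (blast elim: equivE)
      then show "(x, z) \<in> X" using xy yz X by (blast dest: transD)
    qed
  qed
qed

lemma spreading_props:
  "Q \<subseteq> spreading G Q" "propagated G (spreading G Q)" "equiv UNIV (spreading G Q)"
proof -
  show "Q \<subseteq> spreading G Q" unfolding spreading_def by (rule Inter_greatest) simp
  show "propagated G (spreading G Q)" unfolding spreading_def by (rule Inter_propagated) simp
  show "equiv UNIV (spreading G Q)" unfolding spreading_def by (rule Inter_equiv) simp
qed

lemma prop_sub_spread: "propagation G Q \<subseteq> spreading G Q"
proof -
  have "T G Q \<subseteq> spreading G Q" using T_sub[OF spreading_props(2) spreading_props(1)] .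
  then show ?thesis by (simp add: propagation_eq)
qed

lemma hom_D: "homogeneous G R \<Longrightarrow> (x, y) \<in> R \<Longrightarrow> homogeneous_nodes G x y"
  unfolding homogeneous_def by auto

lemma hn_Lam: "homogeneous_nodes G x y \<Longrightarrow> G x = Lam x' \<Longrightarrow> \<exists>y'. G y = Lam y'"
  unfolding homogeneous_nodes_def by auto

lemma hn_App: "homogeneous_nodes G x y \<Longrightarrow> G x = App x1 x2 \<Longrightarrow> \<exists>y1 y2. G y = App y1 y2"
  unfolding homogeneous_nodes_def by auto

lemma hn_BVar: "homogeneous_nodes G x y \<Longrightarrow> G x = BVar x' \<Longrightarrow> \<exists>y'. G y = BVar y'"
  unfolding homogeneous_nodes_def by auto

lemma prop_Lam: "propagated G R \<Longrightarrow> (x, y) \<in> R \<Longrightarrow> G x = Lam x' \<Longrightarrow> G y = Lam y' \<Longrightarrow> (x', y') \<in> R"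
  unfolding propagated_def by blast

lemma prop_App: "propagated G R \<Longrightarrow> (x, y) \<in> R \<Longrightarrow> G x = App x1 x2 \<Longrightarrow> G y = App y1 y2 \<Longrightarrow>
   (x1, y1) \<in> R \<and> (x2, y2) \<in> R"
  unfolding propagated_def by blast

lemma follow0:
  assumes h: "homogeneous G R" and p: "propagated G R"
  shows "path G a s x \<Longrightarrow> (a, b) \<in> R \<Longrightarrow> \<exists>y. path G b s y \<and> (x, y) \<in> R"
proof (induction rule: path.induct)
  case (path_nil n)
  have "path G b [] b" by (rule path.path_nil)
  then show ?case using path_nil by blast
next
  case (path_down n tau m m')
  obtain y0 where y0: "path G b tau y0" "(m, y0) \<in> R" using path_down.IH path_down.prems by blast
  obtain y' where y': "G y0 = Lam y'" using hn_Lam[OF hom_D[OF h y0(2)] path_down.hyps(2)] by blast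
  have "(m', y') \<in> R" by (rule prop_Lam[OF p y0(2) path_down.hyps(2) y'])
  moreover have "path G b (Down # tau) y'" by (rule path.path_down[OF y0(1) y'])
  ultimately show ?case by blast
next
  case (path_sw n tau m m1 m2)
  obtain y0 where y0: "path G b tau y0" "(m, y0) \<in> R" using path_sw.IH path_sw.prems by blast
  obtain c d where y': "G y0 = App c d" using hn_App[OF hom_D[OF h y0(2)] path_sw.hyps(2)] by blast
  have "(m1, c) \<in> R" using prop_App[OF p y0(2) path_sw.hyps(2) y'] by blast
  moreover have "path G b (SW # tau) c" by (rule path.path_sw[OF y0(1) y'])
  ultimately show ?case by blast
next
  case (path_se n tau m m1 m2)
  obtain y0 where y0: "path G b tau y0" "(m, y0) \<in> R" using path_se.IH path_se.prems by blast
  obtain c d where y': "G y0 = App c d" using hn_App[OF hom_D[OF h y0(2)] path_se.hyps(2)] by blast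
  have "(m2, d) \<in> R" using prop_App[OF p y0(2) path_se.hyps(2) y'] by blast
  moreover have "path G b (SE # tau) d" by (rule path.path_se[OF y0(1) y'])
  ultimately show ?case by blast
qed

lemma follow:
  assumes h: "homogeneous G R" and p: "propagated G R" and ab: "(a, b) \<in> R"
  shows "path G a s x \<Longrightarrow> \<exists>y. path G b s y \<and> (x, y) \<in> R"
  using follow0[OF h p] ab by blast

lemma noloop:
  assumes lg: "lambda_graph G" and h: "homogeneous G R" and p: "propagated G R"
    and ab: "(a, b) \<in> R" and pab: "path G a s b" and sne: "s \<noteq> []"
  shows False
proof -
  define f where "f = rec_nat a (\<lambda>_ x. SOME y. path G x s y \<and> (x, y) \<in> R)"
  have f0: "f 0 = a" and fS: "\<And>i. f (Suc i) = (SOME y. path G (f i) s y \<and> (f i, y) \<in> R)"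
    unfolding f_def by simp_all
  have inv: "path G (f i) s (f (Suc i)) \<and> (f i, f (Suc i)) \<in> R" for i
  proof (induction i)
    case 0
    have "\<exists>y. path G a s y \<and> (a, y) \<in> R" using ab pab by blast
    then show ?case unfolding fS f0 by (rule someI_ex)
  next
    case (Suc i)
    have "\<exists>y. path G (f (Suc i)) s y \<and> (f (Suc i), y) \<in> R"
      using follow[OF h p, of "f i" "f (Suc i)" s "f (Suc i)"] Suc by blast
    then show ?case unfolding fS[of "Suc i"] by (rule someI_ex)
  qed
  have pw: "path G (f i) (concat (replicate k s)) (f (i + k))" for i k
  proof (induction k)
    case 0 then show ?case by (simp add: path.path_nil)
  next
    case (Suc k)
    have "path G (f i) (s @ concat (replicate k s)) (f (Suc (i + k)))"
      using path_app[OF conjunct1[OF inv[of "i+k"]] Suc] .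
    then show ?case by simp
  qed
  have "\<not> inj f"
  proof
    assume "inj f"
    have "finite (range f)" using lg unfolding lambda_graph_def by (metis finite_subset subset_UNIV)
    with \<open>inj f\<close> have "finite (UNIV :: nat set)" using finite_imageD by blast
    then show False by simp
  qed
  then obtain i j where ij: "i \<noteq> j" "f i = f j" unfolding inj_def by blast
  have "\<exists>i k. k > 0 \<and> f i = f (i + k)"
  proof (cases "i < j")
    case True then show ?thesis using ij by (intro exI[of _ i] exI[of _ "j - i"]) auto
  next
    case False then show ?thesis using ij by (intro exI[of _ j] exI[of _ "i - j"]) auto
  qed
  then obtain i k where k: "k > 0" "f i = f (i + k)" by blast
  have "path G (f i) (concat (replicate k s)) (f i)" using pw[of i k] k by simp
  with lg have "concat (replicate k s) = []" unfolding lambda_graph_def by blast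
  with k sne show False by (cases k) auto
qed

lemma hn_sym: "homogeneous_nodes G x y \<Longrightarrow> homogeneous_nodes G y x"
  unfolding homogeneous_nodes_def by blast

lemma hn_refl: "homogeneous_nodes G x x"
  unfolding homogeneous_nodes_def by (cases "G x") auto

lemma hn_trans: "homogeneous_nodes G x y \<Longrightarrow> homogeneous_nodes G y z \<Longrightarrow> homogeneous_nodes G x z"
  unfolding homogeneous_nodes_def by auto

lemma bisim_Var: "bisimulation G R \<Longrightarrow> (x, y) \<in> R \<Longrightarrow> G x = BVar l \<Longrightarrow> G y = BVar k \<Longrightarrow> (l, k) \<in> R"
  unfolding bisimulation_def by blast

lemma bisimI: "homogeneous G R \<Longrightarrow> propagated G R \<Longrightarrow>
  (\<And>n m l k. (n, m) \<in> R \<Longrightarrow> G n = BVar l \<Longrightarrow> G m = BVar k \<Longrightarrow> (l, k) \<in> R) \<Longrightarrow> bisimulation G R"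
  unfolding bisimulation_def by blast

lemma homI: "(\<And>x y. (x, y) \<in> R \<Longrightarrow> homogeneous_nodes G x y) \<Longrightarrow> homogeneous G R"
  unfolding homogeneous_def by blast

lemma propI: "(\<And>x y x1 x2 y1 y2. (x, y) \<in> R \<Longrightarrow> G x = App x1 x2 \<Longrightarrow> G y = App y1 y2 \<Longrightarrow> (x1, y1) \<in> R \<and> (x2, y2) \<in> R)
  \<Longrightarrow> (\<And>x y x' y'. (x, y) \<in> R \<Longrightarrow> G x = Lam x' \<Longrightarrow> G y = Lam y' \<Longrightarrow> (x', y') \<in> R) \<Longrightarrow> propagated G R"
  unfolding propagated_def by blast

lemma bisim_sym:
  assumes b: "bisimulation G R"
  shows "bisimulation G (R \<union> R\<inverse>)"
proof -
  have h: "homogeneous G R" and p: "propagated G R" using b unfolding bisimulation_def by auto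
  show ?thesis
  proof (rule bisimI)
    show "homogeneous G (R \<union> R\<inverse>)"
    proof (rule homI)
      fix x y assume "(x, y) \<in> R \<union> R\<inverse>"
      then show "homogeneous_nodes G x y"
      proof
        assume "(x, y) \<in> R" then show ?thesis by (rule hom_D[OF h])
      next
        assume "(x, y) \<in> R\<inverse>" then have "(y, x) \<in> R" by simp
        then show ?thesis by (rule hn_sym[OF hom_D[OF h]])
      qed
    qed
    show "propagated G (R \<union> R\<inverse>)"
    proof (rule propI)
      fix x y x1 x2 y1 y2 assume xy: "(x, y) \<in> R \<union> R\<inverse>" and a: "G x = App x1 x2" "G y = App y1 y2"
      show "(x1, y1) \<in> R \<union> R\<inverse> \<and> (x2, y2) \<in> R \<union> R\<inverse>"
      proof (cases "(x, y) \<in> R")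
        case True then show ?thesis using prop_App[OF p True a] by blast
      next
        case False then have "(y, x) \<in> R" using xy by blast
        then show ?thesis using prop_App[OF p _ a(2) a(1)] by blast
      qed
    next
      fix x y x' y' assume xy: "(x, y) \<in> R \<union> R\<inverse>" and a: "G x = Lam x'" "G y = Lam y'"
      show "(x', y') \<in> R \<union> R\<inverse>"
      proof (cases "(x, y) \<in> R")
        case True then show ?thesis using prop_Lam[OF p True a] by blast
      next
        case False then have "(y, x) \<in> R" using xy by blast
        then show ?thesis using prop_Lam[OF p _ a(2) a(1)] by blast
      qed
    qed
    fix n m l k assume xy: "(n, m) \<in> R \<union> R\<inverse>" and a: "G n = BVar l" "G m = BVar k"
    show "(l, k) \<in> R \<union> R\<inverse>"
    proof (cases "(n, m) \<in> R")
      case True then show ?thesis using bisim_Var[OF b True a] by blast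
    next
      case False then have "(m, n) \<in> R" using xy by blast
      then show ?thesis using bisim_Var[OF b _ a(2) a(1)] by blast
    qed
  qed
qed

lemma bisim_rtrancl:
  assumes b: "bisimulation G P"
  shows "bisimulation G (P\<^sup>*)"
proof -
  have h: "homogeneous G P" and p: "propagated G P" using b unfolding bisimulation_def by auto
  have main: "homogeneous_nodes G x y \<and>
     (\<forall>x1 x2 y1 y2. G x = App x1 x2 \<longrightarrow> G y = App y1 y2 \<longrightarrow> (x1, y1) \<in> P\<^sup>* \<and> (x2, y2) \<in> P\<^sup>*) \<and>
     (\<forall>x' y'. G x = Lam x' \<longrightarrow> G y = Lam y' \<longrightarrow> (x', y') \<in> P\<^sup>*) \<and>
     (\<forall>l k. G x = BVar l \<longrightarrow> G y = BVar k \<longrightarrow> (l, k) \<in> P\<^sup>*)" if "(x, y) \<in> P\<^sup>*" for x y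
    using that
  proof (induction rule: rtrancl_induct)
    case base then show ?case using hn_refl by auto
  next
    case (step y z)
    have hyz: "homogeneous_nodes G y z" using hom_D[OF h step.hyps(2)] .
    from step.IH have hxy: "homogeneous_nodes G x y" by blast
    show ?case
    proof (intro conjI allI impI)
      show "homogeneous_nodes G x z" using hn_trans[OF hxy hyz] .
    next
      fix x1 x2 z1 z2 assume a: "G x = App x1 x2" "G z = App z1 z2"
      then obtain y1 y2 where yy: "G y = App y1 y2" using hn_App[OF hxy] by blast
      have "(x1, y1) \<in> P\<^sup>*" "(x2, y2) \<in> P\<^sup>*" using step.IH a(1) yy by auto
      moreover have "(y1, z1) \<in> P" "(y2, z2) \<in> P" using prop_App[OF p step.hyps(2) yy a(2)] by auto
      ultimately show "(x1, z1) \<in> P\<^sup>*" "(x2, z2) \<in> P\<^sup>*" by (meson rtrancl.rtrancl_into_rtrancl)+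
    next
      fix x' z' assume a: "G x = Lam x'" "G z = Lam z'"
      then obtain y' where yy: "G y = Lam y'" using hn_Lam[OF hxy] by blast
      have "(x', y') \<in> P\<^sup>*" using step.IH a(1) yy by auto
      moreover have "(y', z') \<in> P" using prop_Lam[OF p step.hyps(2) yy a(2)] .
      ultimately show "(x', z') \<in> P\<^sup>*" by (meson rtrancl.rtrancl_into_rtrancl)
    next
      fix l k assume a: "G x = BVar l" "G z = BVar k"
      then obtain y' where yy: "G y = BVar y'" using hn_BVar[OF hxy] by blast
      have "(l, y') \<in> P\<^sup>*" using step.IH a(1) yy by auto
      moreover have "(y', k) \<in> P" using bisim_Var[OF b step.hyps(2) yy a(2)] .
      ultimately show "(l, k) \<in> P\<^sup>*" by (meson rtrancl.rtrancl_into_rtrancl)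
    qed
  qed
  show ?thesis
  proof (rule bisimI)
    show "homogeneous G (P\<^sup>*)" by (rule homI) (use main in blast)
    show "propagated G (P\<^sup>*)" by (rule propI) (use main in blast)+
    show "\<And>n m l k. (n, m) \<in> P\<^sup>* \<Longrightarrow> G n = BVar l \<Longrightarrow> G m = BVar k \<Longrightarrow> (l, k) \<in> P\<^sup>*"
      using main by blast
  qed
qed

lemma equiv_closure_bisim:
  assumes b: "bisimulation G R"
  shows "bisimulation G ((R \<union> R\<inverse>)\<^sup>*)"
  by (rule bisim_rtrancl[OF bisim_sym[OF b]])

lemma sub_spreading: "Q \<subseteq> X \<Longrightarrow> propagated G X \<Longrightarrow> equiv UNIV X \<Longrightarrow> spreading G Q \<subseteq> X"
  unfolding spreading_def by (rule Inter_lower) simp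

lemma forward:
  assumes bP: "bisimulation G (propagation G Q)"
  shows "bisimulation G (spreading G Q)"
proof -
  let ?P = "propagation G Q" and ?S = "spreading G Q"
  let ?E = "(?P \<union> ?P\<inverse>)\<^sup>*"
  have bE: "bisimulation G ?E" using equiv_closure_bisim[OF bP] .
  have eqE: "equiv UNIV ?E"
  proof (rule equivI)
    show "?E \<subseteq> UNIV \<times> UNIV" by simp
    show "refl_on UNIV ?E" by (rule refl_onI) simp
    show "sym ?E" by (rule sym_rtrancl[OF sym_Un_converse])
    show "trans ?E" by (rule trans_rtrancl)
  qed
  have "Q \<subseteq> ?P" unfolding propagation_eq by (rule T_sup)
  also have "?P \<subseteq> ?E" by auto
  finally have QE: "Q \<subseteq> ?E" .
  have pE: "propagated G ?E" using bE unfolding bisimulation_def by simp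
  have SE: "?S \<subseteq> ?E" by (rule sub_spreading[OF QE pE eqE])
  have eqS: "equiv UNIV ?S" by (rule spreading_props(3))
  have reflS: "refl_on UNIV ?S" and symS: "sym ?S" and transS: "trans ?S"
    using eqS unfolding equiv_def by simp_all
  have ES: "?E \<subseteq> ?S"
  proof (rule subrelI)
    fix x y assume "(x, y) \<in> ?E"
    then show "(x, y) \<in> ?S"
    proof (induction rule: rtrancl_induct)
      case base
      show ?case by (rule refl_onD[OF reflS UNIV_I])
    next
      case (step y z)
      have "(y, z) \<in> ?S"
      proof (cases "(y, z) \<in> ?P")
        case True then show ?thesis using prop_sub_spread[of G Q] by (rule subsetD[rotated])
      next
        case False then have "(z, y) \<in> ?P" using step.hyps(2) by simp
        then have "(z, y) \<in> ?S" using prop_sub_spread[of G Q] by (rule subsetD[rotated])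
        then show ?thesis by (rule symD[OF symS])
      qed
      then show ?case by (rule transD[OF transS step.IH])
    qed
  qed
  from SE ES have "?S = ?E" by (rule antisym)
  with bE show ?thesis by simp
qed

lemma backward:
  assumes lg: "lambda_graph G" and qu: "query G Q" and bS: "bisimulation G (spreading G Q)"
  shows "bisimulation G (propagation G Q)"
proof -
  let ?P = "propagation G Q" and ?S = "spreading G Q"
  have sub: "?P \<subseteq> ?S" by (rule prop_sub_spread)
  have eqS: "equiv UNIV ?S" by (rule spreading_props(3))
  have symS: "sym ?S" and transS: "trans ?S" using eqS unfolding equiv_def by simp_all
  have hS: "homogeneous G ?S" and pS: "propagated G ?S" using bS unfolding bisimulation_def by auto
  have hP: "homogeneous G ?P"
  proof (rule homI)
    fix x y assume "(x, y) \<in> ?P" then have "(x, y) \<in> ?S" using sub by blast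
    then show "homogeneous_nodes G x y" by (rule hom_D[OF hS])
  qed
  have pP: "propagated G ?P" unfolding propagation_eq by (rule T_prop)
  show ?thesis
  proof (rule bisimI[OF hP pP])
    fix n m l k assume nm: "(n, m) \<in> ?P" and gn: "G n = BVar l" and gm: "G m = BVar k"
    from nm have "(n, m) \<in> T G Q" unfolding propagation_eq .
    from T_E[OF this] obtain r s t where rs: "(r, s) \<in> Q" "path G r t n" "path G s t m" by blast
    have qr: "\<forall>(r, s) \<in> Q. is_root G r \<and> is_root G s" using qu unfolding query_def .
    have roots: "is_root G r" "is_root G s" using bspec[OF qr rs(1)] by simp_all
    have dom: "\<forall>n l. G n = BVar l \<longrightarrow> dominates G l n" using lg unfolding lambda_graph_def by simp
    have dl: "dominates G l n" using dom gn by simp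
    have dk: "dominates G k m" using dom gm by simp
    have "crosses G r t l" using dl roots(1) rs(2) unfolding dominates_def by simp
    from crosses_split[OF this] obtain t0 t1 where tt1: "t = t0 @ t1" "path G r t1 l" by blast
    have "crosses G s t k" using dk roots(2) rs(3) unfolding dominates_def by simp
    from crosses_split[OF this] obtain t0' t1' where tt2: "t = t0' @ t1'" "path G s t1' k" by blast
    have "(n, m) \<in> ?S" using nm sub by blast
    then have lkS: "(l, k) \<in> ?S" by (rule bisim_Var[OF bS _ gn gm])
    from tt1(1) tt2(1) have "t0 @ t1 = t0' @ t1'" by simp
    then obtain us where us: "(t0 = t0' @ us \<and> us @ t1 = t1') \<or> (t0 @ us = t0' \<and> t1 = us @ t1')"
      unfolding append_eq_append_conv2 by blast
    show "(l, k) \<in> ?P"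
    proof (cases "us = []")
      case True
      with us have "t1 = t1'" by auto
      with tt2(2) have "path G s t1 k" by simp
      with tt1(2) have "(l, k) \<in> T G Q" by (rule T_I[OF rs(1)])
      then show ?thesis unfolding propagation_eq .
    next
      case False
      from us show ?thesis
      proof
        assume u: "t0 = t0' @ us \<and> us @ t1 = t1'"
        then have "path G s (us @ t1) k" using tt2(2) by simp
        from path_split[OF this] obtain x where x: "path G s t1 x" "path G x us k" by blast
        have "(l, x) \<in> T G Q" by (rule T_I[OF rs(1) tt1(2) x(1)])
        then have "(l, x) \<in> ?S" using sub unfolding propagation_eq by (rule subsetD[rotated])
        then have "(x, l) \<in> ?S" by (rule symD[OF symS])
        then have "(x, k) \<in> ?S" using lkS by (rule transD[OF transS])
        from noloop[OF lg hS pS this x(2) False] show ?thesis by (rule FalseE)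
      next
        assume u: "t0 @ us = t0' \<and> t1 = us @ t1'"
        then have "path G r (us @ t1') l" using tt1(2) by simp
        from path_split[OF this] obtain x where x: "path G r t1' x" "path G x us l" by blast
        have "(x, k) \<in> T G Q" by (rule T_I[OF rs(1) x(1) tt2(2)])
        then have "(x, k) \<in> ?S" using sub unfolding propagation_eq by (rule subsetD[rotated])
        moreover have "(k, l) \<in> ?S" using lkS by (rule symD[OF symS])
        ultimately have "(x, l) \<in> ?S" by (rule transD[OF transS])
        from noloop[OF lg hS pS this x(2) False] show ?thesis by (rule FalseE)
      qed
    qed
  qed
qed

theorem mainTheorem13:
  fixes G :: "'n \<Rightarrow> ('n, 'a) node" and Q :: "('n \<times> 'n) set"
  assumes "lambda_graph G" and "query G Q"
  shows "bisimulation G (propagation G Q) \<longleftrightarrow> bisimulation G (spreading G Q)"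
  using forward[of G Q] backward[OF assms] by blast

end
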